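(* Let $\mathcal Y=(\Gamma,T)$ be a coherent configuration, $m\ge1$, $\Delta=\{1,\dots,m\}$, $L\le\mathrm{Sym}(\Delta)$, and $\mathcal X=\mathcal Y\uparrow L=(\Omega,S)$ with $\Omega=\Gamma^m$. For $\alpha,\beta\in\Omega$ let $d(\alpha,\beta)$ be the number of $i\in\Delta$ with $\alpha_i\neq\beta_i$, let $r_i=\{(\alpha,\beta):d(\alpha,\beta)=i\}$ for $0\le i\le m$, $r_{-1}=\emptyset$ and $r=r_1$. Fix $\gamma_0\in\Gamma$, let $\alpha\in\Omega$ be the point with all coordinates $\gamma_0$, and for $i\in\Delta$ let $\Gamma_i=\{\beta\in\Omega:d(\alpha,\beta)=1,\ \beta_i\ne\gamma_0\}$, so that $\alpha r=\{\beta:(\alpha,\beta)\in r\}$ is the disjoint union of the $\Gamma_i$. Then the map $\rho:\Omega\to2^{\alpha r}$, $\beta\mapsto\beta r_{d-1}\cap\alpha r$ where $d=d(\alpha,\beta)$ (and $\beta r_{d-1}=\{\delta:(\beta,\delta)\in r_{d-1}\}$), is injective and its image is $\{\Lambda\subseteq\alpha r: |\Lambda\cap\Gamma_i|\le 1\text{ for all }i\in\Delta\}$. In particular, the set $\alpha r$ is a base of the coherent configuration $\mathcal X_\alpha$.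
   Context: A coherent configuration on a finite set $\Omega$ is $(\Omega,S)$ with $S$ a partition of $\Omega\times\Omega$ such that $1_\Omega$ is a union of elements of $S$, $s^*=\{(\beta,\alpha):(\alpha,\beta)\in s\}\in S$, and for $r,s,t\in S$ the number $|\{\gamma:(\alpha,\gamma)\in r,(\gamma,\beta)\in s\}|$ is independent of $(\alpha,\beta)\in t$; fibers are sets $\Gamma$ with $1_\Gamma\in S$. Exponentiation: for $t_1,\dots,t_m\in T$ put $t_1\otimes\dots\otimes t_m=\{(\alpha,\beta)\in\Gamma^m\times\Gamma^m:(\alpha_i,\beta_i)\in t_i\ \forall i\}$; $L$ acts on $\Gamma^m$ by permuting coordinates and hence on such relations; $\mathcal Y\uparrow L=(\Gamma^m,\{\bigcup_{l\in L}t^l:t=t_1\otimes\dots\otimes t_m,\ t_i\in T\})$, a coherent configuration. A fission of $\mathcal X$ is a coherent configuration on $\Omega$ whose relations (unions of basic relations) include those of $\mathcal X$; complete: all basic relations singletons. $\mathcal X_\alpha$ is the smallest fission of $\mathcal X$ in which $\{\alpha\}$ is a fiber. A set $B$ is a base of a coherent configuration $\mathcal Z$ if the smallest fission of $\mathcal Z$ in which every $\{\beta\}$, $\beta\in B$, is a fiber is complete. *)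

theory Defs
  imports "HOL-Combinatorics.Permutations"
begin

definition is_partition_of :: "'a set \<Rightarrow> 'a set set \<Rightarrow> bool" where
  "is_partition_of X S \<longleftrightarrow> \<Union>S = X \<and> {} \<notin> S \<and>
     (\<forall>s\<in>S. \<forall>t\<in>S. s \<noteq> t \<longrightarrow> s \<inter> t = {})"

definition rels :: "('a \<times> 'a) set set \<Rightarrow> ('a \<times> 'a) set set" where
  "rels S = Union ` Pow S"

definition coherent_configuration :: "'a set \<Rightarrow> ('a \<times> 'a) set set \<Rightarrow> bool" where
  "coherent_configuration \<Omega> S \<longleftrightarrow>
     finite \<Omega> \<and>
     is_partition_of (\<Omega> \<times> \<Omega>) S \<and>
     Id_on \<Omega> \<in> rels S \<and>
     (\<forall>s\<in>S. converse s \<in> S) \<and>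
     (\<forall>r\<in>S. \<forall>s\<in>S. \<forall>t\<in>S. \<exists>c::nat. \<forall>(a, b)\<in>t.
        card {g. (a, g) \<in> r \<and> (g, b) \<in> s} = c)"

definition is_fiber :: "('a \<times> 'a) set set \<Rightarrow> 'a set \<Rightarrow> bool" where
  "is_fiber S \<Delta> \<longleftrightarrow> Id_on \<Delta> \<in> S"

definition fission :: "'a set \<Rightarrow> ('a \<times> 'a) set set \<Rightarrow> ('a \<times> 'a) set set \<Rightarrow> bool" where
  "fission \<Omega> S' S \<longleftrightarrow> coherent_configuration \<Omega> S' \<and> rels S \<subseteq> rels S'"

definition complete_cc :: "'a set \<Rightarrow> ('a \<times> 'a) set set \<Rightarrow> bool" where
  "complete_cc \<Omega> S \<longleftrightarrow> coherent_configuration \<Omega> S \<and> (\<forall>s\<in>S. card s = 1)"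

definition smallest_fission ::
  "'a set \<Rightarrow> ('a \<times> 'a) set set \<Rightarrow> (('a \<times> 'a) set set \<Rightarrow> bool) \<Rightarrow> ('a \<times> 'a) set set" where
  "smallest_fission \<Omega> S P = (THE S'. fission \<Omega> S' S \<and> P S' \<and>
      (\<forall>S''. fission \<Omega> S'' S \<and> P S'' \<longrightarrow> rels S' \<subseteq> rels S''))"

definition point_extension :: "'a set \<Rightarrow> ('a \<times> 'a) set set \<Rightarrow> 'a \<Rightarrow> ('a \<times> 'a) set set" where
  "point_extension \<Omega> S \<alpha> = smallest_fission \<Omega> S (\<lambda>S'. is_fiber S' {\<alpha>})"

definition is_base :: "'a set \<Rightarrow> ('a \<times> 'a) set set \<Rightarrow> 'a set \<Rightarrow> bool" where
  "is_base \<Omega> S B \<longleftrightarrow>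
     complete_cc \<Omega> (smallest_fission \<Omega> S (\<lambda>S'. \<forall>\<beta>\<in>B. is_fiber S' {\<beta>}))"

text \<open>Points of \<Gamma>^m are lists of length m, coordinates indexed by {0..<m}.\<close>
definition cart_power :: "'a set \<Rightarrow> nat \<Rightarrow> 'a list set" where
  "cart_power \<Gamma> m = {a. length a = m \<and> set a \<subseteq> \<Gamma>}"

definition tensor :: "nat \<Rightarrow> ('a \<times> 'a) set list \<Rightarrow> ('a list \<times> 'a list) set" where
  "tensor m ts = {(a, b). length a = m \<and> length b = m \<and> (\<forall>i<m. (a ! i, b ! i) \<in> ts ! i)}"

text \<open>action of a permutation l of coordinates: coordinate i is moved to l i\<close>
definition perm_pt :: "(nat \<Rightarrow> nat) \<Rightarrow> 'a list \<Rightarrow> 'a list" where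
  "perm_pt l a = map (\<lambda>j. a ! inv l j) [0..<length a]"

definition perm_rel :: "(nat \<Rightarrow> nat) \<Rightarrow> ('a list \<times> 'a list) set \<Rightarrow> ('a list \<times> 'a list) set" where
  "perm_rel l t = (\<lambda>(a, b). (perm_pt l a, perm_pt l b)) ` t"

definition exp_rels :: "('a \<times> 'a) set set \<Rightarrow> nat \<Rightarrow> (nat \<Rightarrow> nat) set \<Rightarrow> ('a list \<times> 'a list) set set" where
  "exp_rels T m L = {\<Union>l\<in>L. perm_rel l (tensor m ts) | ts. length ts = m \<and> set ts \<subseteq> T}"

definition perm_group_on :: "nat set \<Rightarrow> (nat \<Rightarrow> nat) set \<Rightarrow> bool" where
  "perm_group_on \<Delta> L \<longleftrightarrow> id \<in> L \<and> (\<forall>l\<in>L. l permutes \<Delta>) \<and>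
     (\<forall>l\<in>L. \<forall>l'\<in>L. l \<circ> l' \<in> L) \<and> (\<forall>l\<in>L. inv l \<in> L)"

definition hdist :: "nat \<Rightarrow> 'a list \<Rightarrow> 'a list \<Rightarrow> nat" where
  "hdist m a b = card {i. i < m \<and> a ! i \<noteq> b ! i}"

text \<open>r_k for integer k (r_{-1} = empty)\<close>
definition dist_rel :: "'a set \<Rightarrow> nat \<Rightarrow> int \<Rightarrow> ('a list \<times> 'a list) set" where
  "dist_rel \<Gamma> m k = (if k < 0 then {} else
     {(a, b). a \<in> cart_power \<Gamma> m \<and> b \<in> cart_power \<Gamma> m \<and> int (hdist m a b) = k})"

end

theory Submission
  imports Defs
begin

lemma part_disj: "is_partition_of X S \<Longrightarrow> s\<in>S \<Longrightarrow> t\<in>S \<Longrightarrow> s\<inter>t\<noteq>{} \<Longrightarrow> s=t"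
  unfolding is_partition_of_def by metis
lemma part_cover: "is_partition_of X S \<Longrightarrow> p\<in>X \<Longrightarrow> \<exists>s\<in>S. p\<in>s"
  unfolding is_partition_of_def by auto
lemma part_sub: "is_partition_of X S \<Longrightarrow> s\<in>S \<Longrightarrow> s\<subseteq>X"
  unfolding is_partition_of_def by auto
lemma part_ne: "is_partition_of X S \<Longrightarrow> s\<in>S \<Longrightarrow> s\<noteq>{}"
  unfolding is_partition_of_def by auto

lemma rels_char:
  assumes P: "is_partition_of X S"
  shows "R \<in> rels S \<longleftrightarrow> R \<subseteq> X \<and> (\<forall>s\<in>S. s \<inter> R \<noteq> {} \<longrightarrow> s \<subseteq> R)"
proof
  assume "R \<in> rels S"
  then obtain U where U: "U \<subseteq> S" "R = \<Union>U" unfolding rels_def by auto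
  show "R \<subseteq> X \<and> (\<forall>s\<in>S. s \<inter> R \<noteq> {} \<longrightarrow> s \<subseteq> R)"
  proof
    show "R \<subseteq> X" using U part_sub[OF P] by auto
    show "\<forall>s\<in>S. s \<inter> R \<noteq> {} \<longrightarrow> s \<subseteq> R"
    proof (intro ballI impI)
      fix s assume s: "s \<in> S" "s \<inter> R \<noteq> {}"
      then obtain u where "u \<in> U" "s \<inter> u \<noteq> {}" using U by auto
      then have "s = u" using part_disj[OF P s(1), of u] U by auto
      then show "s \<subseteq> R" using \<open>u \<in> U\<close> U by auto
    qed
  qed
next
  assume H: "R \<subseteq> X \<and> (\<forall>s\<in>S. s \<inter> R \<noteq> {} \<longrightarrow> s \<subseteq> R)"
  have "R = \<Union>{s\<in>S. s \<subseteq> R}"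
  proof
    show "R \<subseteq> \<Union>{s\<in>S. s \<subseteq> R}"
    proof
      fix p assume "p \<in> R"
      then have "p \<in> X" using H by auto
      then obtain s where s: "s \<in> S" "p \<in> s" using part_cover[OF P \<open>p \<in> X\<close>] by blast
      then have "s \<subseteq> R" using H \<open>p \<in> R\<close> by auto
      then show "p \<in> \<Union>{s\<in>S. s \<subseteq> R}" using s by auto
    qed
  qed auto
  then show "R \<in> rels S" unfolding rels_def by blast
qed

lemma in_rels: "s \<in> S \<Longrightarrow> s \<in> rels S"
  unfolding rels_def by (metis Pow_iff Sup_empty UNIV_I UnionI empty_subsetI imageI insert_subset
         Union_insert Un_empty_right)

lemma rels_eq_imp_eq:
  assumes p1: "is_partition_of X S1" and p2: "is_partition_of X S2" and eq: "rels S1 = rels S2"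
  shows "S1 = S2"
proof -
  have *: "s \<in> T2" if q1: "is_partition_of X T1" and q2: "is_partition_of X T2"
     and e: "rels T1 = rels T2" and s: "s \<in> T1" for T1 T2 s
  proof -
    have sr: "s \<in> rels T2" using in_rels[OF s] e by simp
    obtain p where p: "p \<in> s" using part_ne[OF q1 s] by auto
    have "p \<in> X" using p part_sub[OF q1 s] by auto
    then obtain u where u: "u \<in> T2" "p \<in> u" using part_cover[OF q2 \<open>p \<in> X\<close>] by blast
    have "u \<subseteq> s" using sr u p rels_char[OF q2, of s] by auto
    moreover have "u \<in> rels T1" using e in_rels[OF u(1)] by simp
    then have "s \<subseteq> u" using s u p rels_char[OF q1, of u] by auto
    ultimately show ?thesis using u by auto
  qed
  show ?thesis using *[OF p1 p2 eq] *[OF p2 p1 eq[symmetric]] by blast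
qed

lemma cc_part: "coherent_configuration \<Omega> S \<Longrightarrow> is_partition_of (\<Omega>\<times>\<Omega>) S"
  unfolding coherent_configuration_def by simp

lemma cc_sub: "coherent_configuration \<Omega> S \<Longrightarrow> s \<in> S \<Longrightarrow> s \<subseteq> \<Omega>\<times>\<Omega>"
  unfolding coherent_configuration_def is_partition_of_def by blast

lemma cc_conv: "coherent_configuration \<Omega> S \<Longrightarrow> s \<in> S \<Longrightarrow> converse s \<in> S"
  unfolding coherent_configuration_def by simp

lemma cc_Id: "coherent_configuration \<Omega> S \<Longrightarrow> Id_on \<Omega> \<in> rels S"
  unfolding coherent_configuration_def by simp

lemma cc_coh:
  assumes "coherent_configuration \<Omega> S" "r\<in>S" "s\<in>S" "t\<in>S" "(a,b)\<in>t" "(a',b')\<in>t"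
  shows "card {g. (a,g)\<in>r \<and> (g,b)\<in>s} = card {g. (a',g)\<in>r \<and> (g,b')\<in>s}"
proof -
  obtain c where "\<forall>(a, b)\<in>t. card {g. (a, g) \<in> r \<and> (g, b) \<in> s} = c"
    using assms(1-4) unfolding coherent_configuration_def by blast
  then have "card {g. (a,g)\<in>r \<and> (g,b)\<in>s} = c" "card {g. (a',g)\<in>r \<and> (g,b')\<in>s} = c"
    using assms(5,6) by auto
  then show ?thesis by simp
qed

lemma cc_count_rels:
  assumes cc: "coherent_configuration \<Omega> S" and R1: "R1 \<in> rels S" and R2: "R2 \<in> rels S"
    and t: "t \<in> S" "(a,b)\<in>t" "(a',b')\<in>t"
  shows "card {g. (a,g)\<in>R1 \<and> (g,b)\<in>R2} = card {g. (a',g)\<in>R1 \<and> (g,b')\<in>R2}"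
proof -
  obtain U1 where U1: "U1 \<subseteq> S" "R1 = \<Union>U1" using R1 unfolding rels_def by auto
  obtain U2 where U2: "U2 \<subseteq> S" "R2 = \<Union>U2" using R2 unfolding rels_def by auto
  have part: "is_partition_of (\<Omega>\<times>\<Omega>) S" using cc by (rule cc_part)
  have finO: "finite \<Omega>" using cc unfolding coherent_configuration_def by simp
  have "S \<subseteq> Pow (\<Omega>\<times>\<Omega>)" using cc_sub[OF cc] by blast
  moreover have "finite (Pow (\<Omega>\<times>\<Omega>))" using finO by simp
  ultimately have finS: "finite S" by (rule finite_subset)
  have "finite U1" "finite U2" using finS U1(1) U2(1) finite_subset by auto
  then have fin12: "finite (U1 \<times> U2)" by simp
  define f :: "'a \<Rightarrow> 'a \<Rightarrow> ('a\<times>'a) set \<times> ('a\<times>'a) set \<Rightarrow> 'a set"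
    where "f x y = (\<lambda>(u1,u2). {g. (x,g)\<in>u1 \<and> (g,y)\<in>u2})" for x y
  have decomp: "{g. (x,g)\<in>R1 \<and> (g,y)\<in>R2} = (\<Union>p\<in>U1\<times>U2. f x y p)" for x y :: 'a
    using U1 U2 by (auto simp: f_def)
  have disj: "\<forall>p\<in>U1\<times>U2. \<forall>q\<in>U1\<times>U2. p \<noteq> q \<longrightarrow> f x y p \<inter> f x y q = {}" for x y
  proof (intro ballI impI)
    fix p q assume pq: "p \<in> U1\<times>U2" "q \<in> U1\<times>U2" "p \<noteq> q"
    obtain p1 p2 q1 q2 where pp: "p = (p1,p2)" "q = (q1,q2)" by (cases p, cases q) auto
    have "p1 \<noteq> q1 \<or> p2 \<noteq> q2" using pq pp by auto
    moreover have "p1 \<in> S" "q1 \<in> S" "p2 \<in> S" "q2 \<in> S" using pq pp U1 U2 by auto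
    ultimately have "p1 \<inter> q1 = {} \<or> p2 \<inter> q2 = {}" using part_disj[OF part] by blast
    then show "f x y p \<inter> f x y q = {}" using pp by (auto simp: f_def)
  qed
  have finf: "finite (f x y p)" if "p \<in> U1\<times>U2" for x y p
  proof -
    obtain p1 p2 where pp: "p = (p1,p2)" by (cases p) auto
    have "p1 \<in> S" using that pp U1 by auto
    then have "f x y p \<subseteq> \<Omega>" using pp cc_sub[OF cc] by (auto simp: f_def)
    then show ?thesis using finO finite_subset by blast
  qed
  have cnt: "card {g. (x,g)\<in>R1 \<and> (g,y)\<in>R2} = (\<Sum>p\<in>U1\<times>U2. card (f x y p))" for x y
    unfolding decomp by (rule card_UN_disjoint[OF fin12]) (use finf disj in auto)
  have "(\<Sum>p\<in>U1\<times>U2. card (f a b p)) = (\<Sum>p\<in>U1\<times>U2. card (f a' b' p))"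
  proof (rule sum.cong)
    fix p assume p: "p \<in> U1\<times>U2"
    obtain p1 p2 where pp: "p = (p1,p2)" by (cases p) auto
    show "card (f a b p) = card (f a' b' p)" using p pp U1 U2 t cc_coh[OF cc, of p1 p2 t a b a' b']
      by (auto simp: f_def)
  qed simp
  then show ?thesis using cnt by simp
qed


definition cnt :: "('a\<times>'a) set \<Rightarrow> ('a\<times>'a) set \<Rightarrow> 'a \<Rightarrow> 'a \<Rightarrow> nat" where
  "cnt R1 R2 x y = card {g. (x,g)\<in>R1 \<and> (g,y)\<in>R2}"

lemma sf_props:
  fixes \<Omega> :: "'a set" and S :: "('a\<times>'a) set set" and B :: "'a set"
  assumes fin: "finite \<Omega>" and SS: "\<Union>S \<subseteq> \<Omega>\<times>\<Omega>" and B: "B \<subseteq> \<Omega>"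
  shows "fission \<Omega> (smallest_fission \<Omega> S (\<lambda>S'. \<forall>b\<in>B. is_fiber S' {b})) S \<and>
     (\<forall>b\<in>B. is_fiber (smallest_fission \<Omega> S (\<lambda>S'. \<forall>b\<in>B. is_fiber S' {b})) {b}) \<and>
     (\<forall>S''. fission \<Omega> S'' S \<and> (\<forall>b\<in>B. is_fiber S'' {b}) \<longrightarrow>
        rels (smallest_fission \<Omega> S (\<lambda>S'. \<forall>b\<in>B. is_fiber S' {b})) \<subseteq> rels S'')"
proof -
  define P where "P = (\<lambda>S'::('a\<times>'a) set set. \<forall>b\<in>B. is_fiber S' {b})"
  define Q where "Q = (\<lambda>S'. fission \<Omega> S' S \<and> P S' \<and>
      (\<forall>S''. fission \<Omega> S'' S \<and> P S'' \<longrightarrow> rels S' \<subseteq> rels S''))"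
  define K where "K = {S''. fission \<Omega> S'' S \<and> P S''}"
  define F where "F = {R. R \<subseteq> \<Omega>\<times>\<Omega> \<and> (\<forall>S''\<in>K. R \<in> rels S'')}"
  have Kcc: "coherent_configuration \<Omega> S''" if "S'' \<in> K" for S''
    using that unfolding K_def fission_def by auto
  have Kpart: "is_partition_of (\<Omega>\<times>\<Omega>) S''" if "S'' \<in> K" for S''
    using cc_part[OF Kcc[OF that]] .
  have Krels: "rels S \<subseteq> rels S''" if "S'' \<in> K" for S''
    using that unfolding K_def fission_def by auto
  have Kfib: "Id_on {b} \<in> S''" if "S'' \<in> K" "b \<in> B" for S'' b
    using that unfolding K_def P_def is_fiber_def by auto
  have Fsat: "R \<in> F \<longleftrightarrow> R \<subseteq> \<Omega>\<times>\<Omega> \<and> (\<forall>S''\<in>K. \<forall>s\<in>S''. s \<inter> R \<noteq> {} \<longrightarrow> s \<subseteq> R)" for R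
  proof -
    have "R \<in> rels S'' \<longleftrightarrow> R \<subseteq> \<Omega>\<times>\<Omega> \<and> (\<forall>s\<in>S''. s \<inter> R \<noteq> {} \<longrightarrow> s \<subseteq> R)" if "S'' \<in> K" for S''
      using rels_char[OF Kpart[OF that]] .
    note * = this
    show ?thesis
    proof
      assume "R \<in> F"
      then have 1: "R \<subseteq> \<Omega>\<times>\<Omega>" "\<And>S''. S''\<in>K \<Longrightarrow> R \<in> rels S''" unfolding F_def by auto
      have "\<forall>S''\<in>K. \<forall>s\<in>S''. s \<inter> R \<noteq> {} \<longrightarrow> s \<subseteq> R"
      proof (rule ballI)
        fix S'' assume "S'' \<in> K"
        then show "\<forall>s\<in>S''. s \<inter> R \<noteq> {} \<longrightarrow> s \<subseteq> R" using *[of S''] 1(2)[of S''] by blast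
      qed
      then show "R \<subseteq> \<Omega>\<times>\<Omega> \<and> (\<forall>S''\<in>K. \<forall>s\<in>S''. s \<inter> R \<noteq> {} \<longrightarrow> s \<subseteq> R)" using 1 by blast
    next
      assume H: "R \<subseteq> \<Omega>\<times>\<Omega> \<and> (\<forall>S''\<in>K. \<forall>s\<in>S''. s \<inter> R \<noteq> {} \<longrightarrow> s \<subseteq> R)"
      have "R \<in> rels S''" if "S'' \<in> K" for S''
        using *[OF that] H that by blast
      then show "R \<in> F" unfolding F_def using H by blast
    qed
  qed
  have FD1: "R \<subseteq> \<Omega>\<times>\<Omega>" if "R \<in> F" for R
    using that Fsat by simp
  have FD2: "s \<subseteq> R" if "R \<in> F" "S'' \<in> K" "s \<in> S''" "s \<inter> R \<noteq> {}" for R S'' s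
  proof -
    have "\<forall>S''\<in>K. \<forall>s\<in>S''. s \<inter> R \<noteq> {} \<longrightarrow> s \<subseteq> R" using that(1) Fsat by simp
    then show ?thesis using that(2-4) by simp
  qed
  have FI: "R \<in> F" if "R \<subseteq> \<Omega>\<times>\<Omega>" "\<And>S'' s. S'' \<in> K \<Longrightarrow> s \<in> S'' \<Longrightarrow> s \<inter> R \<noteq> {} \<Longrightarrow> s \<subseteq> R" for R
    using that Fsat by simp
  have F_Inter: "\<Inter>G \<in> F" if G: "G \<subseteq> F" "G \<noteq> {}" for G
  proof (rule FI)
    obtain R0 where "R0 \<in> G" using G(2) by blast
    then show "\<Inter>G \<subseteq> \<Omega>\<times>\<Omega>" using G(1) FD1 by blast
    fix S'' s assume H: "S'' \<in> K" "s \<in> S''" "s \<inter> \<Inter>G \<noteq> {}"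
    show "s \<subseteq> \<Inter>G"
    proof
      fix p assume "p \<in> s"
      show "p \<in> \<Inter>G"
      proof
        fix R assume "R \<in> G"
        then have "s \<inter> R \<noteq> {}" using H(3) by blast
        then have "s \<subseteq> R" using FD2 \<open>R \<in> G\<close> G(1) H(1,2) by blast
        then show "p \<in> R" using \<open>p \<in> s\<close> by blast
      qed
    qed
  qed
  have F_Union: "\<Union>G \<in> F" if G: "G \<subseteq> F" for G
  proof (rule FI)
    show "\<Union>G \<subseteq> \<Omega>\<times>\<Omega>" using G FD1 by blast
    fix S'' s assume H: "S'' \<in> K" "s \<in> S''" "s \<inter> \<Union>G \<noteq> {}"
    obtain R where R: "R \<in> G" "s \<inter> R \<noteq> {}" using H(3) by blast
    then have "s \<subseteq> R" using FD2 G H(1,2) by blast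
    then show "s \<subseteq> \<Union>G" using R by blast
  qed
  have F_diff: "R1 - R2 \<in> F" if R: "R1 \<in> F" "R2 \<in> F" for R1 R2
  proof (rule FI)
    show "R1 - R2 \<subseteq> \<Omega>\<times>\<Omega>" using R FD1 by blast
    fix S'' s assume H: "S'' \<in> K" "s \<in> S''" "s \<inter> (R1 - R2) \<noteq> {}"
    have "s \<inter> R1 \<noteq> {}" using H(3) by blast
    then have 1: "s \<subseteq> R1" using FD2 R H(1,2) by blast
    have "s \<inter> R2 = {}"
    proof (rule ccontr)
      assume "s \<inter> R2 \<noteq> {}"
      then have "s \<subseteq> R2" using FD2 R H(1,2) by blast
      then show False using H(3) by blast
    qed
    then show "s \<subseteq> R1 - R2" using 1 by blast
  qed
  have F_conv: "converse R \<in> F" if R: "R \<in> F" for R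
  proof (rule FI)
    show "converse R \<subseteq> \<Omega>\<times>\<Omega>" using R FD1 by blast
    fix S'' s assume H: "S'' \<in> K" "s \<in> S''" "s \<inter> converse R \<noteq> {}"
    have c: "converse s \<in> S''" using cc_conv[OF Kcc[OF H(1)] H(2)] .
    have "converse s \<inter> R \<noteq> {}" using H(3) by blast
    then have "converse s \<subseteq> R" using FD2 R H(1) c by blast
    then show "s \<subseteq> converse R" by (simp add: converse_subset_swap)
  qed
  have F_full: "\<Omega>\<times>\<Omega> \<in> F"
    by (rule FI) (auto dest: part_sub[OF Kpart])
  have F_N: "{p\<in>\<Omega>\<times>\<Omega>. cnt R1 R2 (fst p) (snd p) = k} \<in> F" if R: "R1 \<in> F" "R2 \<in> F" for R1 R2 k
  proof (rule FI)
    let ?N = "{p\<in>\<Omega>\<times>\<Omega>. cnt R1 R2 (fst p) (snd p) = k}"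
    show "?N \<subseteq> \<Omega>\<times>\<Omega>" by blast
    fix S'' s assume H: "S'' \<in> K" "s \<in> S''" "s \<inter> ?N \<noteq> {}"
    show "s \<subseteq> ?N"
    proof
      fix q assume q: "q \<in> s"
      obtain p where p: "p \<in> s" "p \<in> ?N" using H(3) by blast
      have r1: "R1 \<in> rels S''" "R2 \<in> rels S''" using R H(1) unfolding F_def by auto
      have "cnt R1 R2 (fst q) (snd q) = cnt R1 R2 (fst p) (snd p)"
        unfolding cnt_def
        by (rule cc_count_rels[OF Kcc[OF H(1)] r1 H(2)]) (use q p in auto)
      moreover have "q \<in> \<Omega>\<times>\<Omega>" using q part_sub[OF Kpart[OF H(1)] H(2)] by blast
      ultimately show "q \<in> ?N" using p by simp
    qed
  qed
  have F_S: "R \<in> F" if "R \<in> rels S" for R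
  proof -
    have "R \<subseteq> \<Omega>\<times>\<Omega>" using that SS unfolding rels_def by blast
    then show ?thesis unfolding F_def using Krels that by blast
  qed
  have F_Id: "Id_on \<Omega> \<in> F"
    unfolding F_def using cc_Id Kcc by blast
  have F_B: "Id_on {b} \<in> F" if "b \<in> B" for b
    unfolding F_def using Kfib in_rels that B by blast
  define A where "A p = \<Inter>{R\<in>F. p\<in>R}" for p
  have A_F: "A p \<in> F" if "p \<in> \<Omega>\<times>\<Omega>" for p
    unfolding A_def by (rule F_Inter) (use F_full that in auto)
  have A_in: "p \<in> A p" if "p \<in> \<Omega>\<times>\<Omega>" for p
    unfolding A_def by blast
  have A_min: "A p \<subseteq> R" if "R \<in> F" "p \<in> R" for p R
    unfolding A_def using that by blast
  have A_sub: "A p \<subseteq> \<Omega>\<times>\<Omega>" if "p \<in> \<Omega>\<times>\<Omega>" for p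
    using A_min[OF F_full that] .
  have A_eq: "A q = A p" if p: "p \<in> \<Omega>\<times>\<Omega>" and q: "q \<in> A p" for p q
  proof -
    have qO: "q \<in> \<Omega>\<times>\<Omega>" using A_sub[OF p] q by blast
    have 1: "A q \<subseteq> A p" using A_min[OF A_F[OF p] q] .
    have "p \<in> A q"
    proof (rule ccontr)
      assume "p \<notin> A q"
      then have "p \<in> A p - A q" using A_in[OF p] by blast
      then have "A p \<subseteq> A p - A q" using A_min[OF F_diff[OF A_F[OF p] A_F[OF qO]]] by blast
      then show False using q A_in[OF qO] by blast
    qed
    then have "A p \<subseteq> A q" using A_min[OF A_F[OF qO]] by blast
    then show ?thesis using 1 by blast
  qed
  define S' where "S' = A ` (\<Omega>\<times>\<Omega>)"
  have part': "is_partition_of (\<Omega>\<times>\<Omega>) S'"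
    unfolding is_partition_of_def
  proof (intro conjI ballI impI)
    show "\<Union>S' = \<Omega>\<times>\<Omega>" unfolding S'_def using A_sub A_in by blast
    show "{} \<notin> S'" unfolding S'_def using A_in by blast
    fix s t assume st: "s \<in> S'" "t \<in> S'" "s \<noteq> t"
    then obtain p q where pq: "p \<in> \<Omega>\<times>\<Omega>" "q \<in> \<Omega>\<times>\<Omega>" "s = A p" "t = A q" unfolding S'_def by blast
    show "s \<inter> t = {}"
    proof (rule ccontr)
      assume "s \<inter> t \<noteq> {}"
      then obtain x where "x \<in> A p" "x \<in> A q" using pq by blast
      then have "A p = A q" using A_eq pq by metis
      then show False using st pq by blast
    qed
  qed
  have relsS': "rels S' = F"
  proof
    show "rels S' \<subseteq> F"
    proof
      fix R assume R: "R \<in> rels S'"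
      then have sat: "R \<subseteq> \<Omega>\<times>\<Omega>" "\<forall>s\<in>S'. s \<inter> R \<noteq> {} \<longrightarrow> s \<subseteq> R" using rels_char[OF part'] by auto
      have "R = \<Union>(A ` R)"
      proof
        show "R \<subseteq> \<Union>(A ` R)" using A_in sat(1) by blast
        show "\<Union>(A ` R) \<subseteq> R"
        proof
          fix x assume "x \<in> \<Union>(A ` R)"
          then obtain p where p: "p \<in> R" "x \<in> A p" by blast
          have "A p \<in> S'" using p sat(1) unfolding S'_def by blast
          moreover have "A p \<inter> R \<noteq> {}" using A_in p sat(1) by blast
          ultimately show "x \<in> R" using sat(2) p by blast
        qed
      qed
      moreover have "\<Union>(A ` R) \<in> F" by (rule F_Union) (use A_F sat(1) in blast)
      ultimately show "R \<in> F" by simp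
    qed
    show "F \<subseteq> rels S'"
    proof
      fix R assume R: "R \<in> F"
      have "R \<subseteq> \<Omega>\<times>\<Omega>" using R FD1 by blast
      moreover have "s \<subseteq> R" if H: "s \<in> S'" "s \<inter> R \<noteq> {}" for s
      proof -
        obtain p where p: "p \<in> \<Omega>\<times>\<Omega>" "s = A p" using H(1) unfolding S'_def by blast
        obtain q where q: "q \<in> A p" "q \<in> R" using H(2) p by blast
        have e: "A q = A p" using A_eq[OF p(1) q(1)] .
        have "A q \<subseteq> R" by (rule A_min[OF R q(2)])
        then show ?thesis using e p(2) by simp
      qed
      ultimately show "R \<in> rels S'" unfolding rels_char[OF part'] by blast
    qed
  qed
  have ccS': "coherent_configuration \<Omega> S'"
    unfolding coherent_configuration_def
  proof (intro conjI ballI)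
    show "finite \<Omega>" by (rule fin)
    show "is_partition_of (\<Omega>\<times>\<Omega>) S'" by (rule part')
    show "Id_on \<Omega> \<in> rels S'" using F_Id relsS' by simp
    fix s assume s: "s \<in> S'"
    then obtain p where p: "p \<in> \<Omega>\<times>\<Omega>" "s = A p" unfolding S'_def by blast
    obtain x y where xy: "p = (x,y)" by (cases p) auto
    have yx: "(y,x) \<in> \<Omega>\<times>\<Omega>" using p xy by auto
    have c1: "converse (A p) \<in> F" using F_conv A_F p by blast
    have "A (y,x) \<subseteq> converse (A p)" using A_min[OF c1] A_in[OF p(1)] xy by blast
    moreover have "A p \<subseteq> converse (A (y,x))"
      using A_min[OF F_conv[OF A_F[OF yx]]] A_in[OF yx] xy by blast
    ultimately have "converse s = A (y,x)" using p by blast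
    then show "converse s \<in> S'" using yx unfolding S'_def by blast
  next
    fix r s t assume rst: "r \<in> S'" "s \<in> S'" "t \<in> S'"
    obtain p where p: "p \<in> \<Omega>\<times>\<Omega>" "t = A p" using rst(3) unfolding S'_def by blast
    have "r \<in> rels S'" "s \<in> rels S'" using in_rels rst(1,2) by auto
    then have rF: "r \<in> F" "s \<in> F" using relsS' by auto
    let ?c = "cnt r s (fst p) (snd p)"
    have "A p \<subseteq> {q\<in>\<Omega>\<times>\<Omega>. cnt r s (fst q) (snd q) = ?c}"
      by (rule A_min[OF F_N[OF rF]]) (use p in auto)
    then have "\<forall>(a, b)\<in>t. card {g. (a, g) \<in> r \<and> (g, b) \<in> s} = ?c"
      using p unfolding cnt_def by auto
    then show "\<exists>c. \<forall>(a, b)\<in>t. card {g. (a, g) \<in> r \<and> (g, b) \<in> s} = c" by blast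
  qed
  have QS': "Q S'"
    unfolding Q_def
  proof (intro conjI allI impI)
    show "fission \<Omega> S' S" unfolding fission_def using ccS' relsS' F_S by blast
    show "P S'" unfolding P_def is_fiber_def
    proof
      fix b assume b: "b \<in> B"
      have bb: "(b,b) \<in> \<Omega>\<times>\<Omega>" using b B by auto
      have "A (b,b) \<subseteq> Id_on {b}" using A_min[OF F_B[OF b]] by auto
      moreover have "(b,b) \<in> A (b,b)" using A_in[OF bb] .
      ultimately have "A (b,b) = Id_on {b}" by auto
      then show "Id_on {b} \<in> S'" using bb unfolding S'_def by force
    qed
    fix S'' assume "fission \<Omega> S'' S \<and> P S''"
    then have "S'' \<in> K" unfolding K_def by blast
    then show "rels S' \<subseteq> rels S''" using relsS' unfolding F_def by blast
  qed
  have uniq: "X = S'" if "Q X" for X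
  proof -
    have X: "fission \<Omega> X S" "P X" "\<forall>S''. fission \<Omega> S'' S \<and> P S'' \<longrightarrow> rels X \<subseteq> rels S''"
      using that unfolding Q_def by auto
    have Q2: "fission \<Omega> S' S" "P S'" "\<forall>S''. fission \<Omega> S'' S \<and> P S'' \<longrightarrow> rels S' \<subseteq> rels S''"
      using QS' unfolding Q_def by auto
    have "rels X \<subseteq> rels S'" using X(3) Q2(1,2) by blast
    moreover have "rels S' \<subseteq> rels X" using Q2(3) X(1,2) by blast
    ultimately have "rels X = rels S'" by blast
    moreover have "is_partition_of (\<Omega>\<times>\<Omega>) X" using X(1) cc_part unfolding fission_def by blast
    ultimately show ?thesis using rels_eq_imp_eq[OF _ part'] by blast
  qed
  have "smallest_fission \<Omega> S P = S'"
  proof -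
    have "(THE X. Q X) = S'" by (rule the_equality[of Q, OF QS' uniq])
    then show ?thesis unfolding smallest_fission_def Q_def by simp
  qed
  then have "Q (smallest_fission \<Omega> S P)" using QS' by simp
  then show ?thesis unfolding Q_def P_def by blast
qed


lemma cc_fin: "coherent_configuration \<Omega> S \<Longrightarrow> finite \<Omega>"
  unfolding coherent_configuration_def by simp

lemma L1a:
  assumes cc: "coherent_configuration \<Omega> S" and s: "s \<in> S" "(a,b) \<in> s" "(a',b') \<in> s"
    and Y: "Id_on Y \<in> S" "a \<in> Y"
  shows "a' \<in> Y"
proof (rule ccontr)
  assume na: "a' \<notin> Y"
  have "card {g. (a,g)\<in>Id_on Y \<and> (g,b)\<in>s} = card {g. (a',g)\<in>Id_on Y \<and> (g,b')\<in>s}"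
    by (rule cc_coh[OF cc Y(1) s(1) s(1) s(2) s(3)])
  moreover have "{g. (a,g)\<in>Id_on Y \<and> (g,b)\<in>s} = {a}" using Y s by auto
  moreover have "{g. (a',g)\<in>Id_on Y \<and> (g,b')\<in>s} = {}" using na by auto
  ultimately show False by simp
qed

lemma L1b:
  assumes cc: "coherent_configuration \<Omega> S" and s: "s \<in> S" "(a,b) \<in> s" "(a',b') \<in> s"
    and Y: "Id_on Y \<in> S" "b \<in> Y"
  shows "b' \<in> Y"
proof (rule ccontr)
  assume na: "b' \<notin> Y"
  have "card {g. (a,g)\<in>s \<and> (g,b)\<in>Id_on Y} = card {g. (a',g)\<in>s \<and> (g,b')\<in>Id_on Y}"
    by (rule cc_coh[OF cc s(1) Y(1) s(1) s(2) s(3)])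
  moreover have "{g. (a,g)\<in>s \<and> (g,b)\<in>Id_on Y} = {b}" using Y s by auto
  moreover have "{g. (a',g)\<in>s \<and> (g,b')\<in>Id_on Y} = {}" using na by auto
  ultimately show False by simp
qed

lemma atom_of:
  assumes cc: "coherent_configuration \<Omega> S" and R: "R \<in> rels S" "p \<in> R"
  obtains v where "v \<in> S" "p \<in> v" "v \<subseteq> R"
proof -
  have part: "is_partition_of (\<Omega>\<times>\<Omega>) S" using cc by (rule cc_part)
  have "p \<in> \<Omega>\<times>\<Omega>" using R rels_char[OF part] by blast
  then obtain v where v: "v \<in> S" "p \<in> v" using part_cover[OF part] by blast
  then have "v \<subseteq> R" using R rels_char[OF part, of R] by blast
  then show ?thesis using v that by blast
qed

lemma LemA:
  assumes cc: "coherent_configuration \<Omega> S" and R: "R \<in> rels S"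
    and b: "Id_on {b} \<in> S" and X: "Id_on X \<in> S" "a \<in> X" "a' \<in> X" and ab: "(a,b) \<in> R"
  shows "(a',b) \<in> R"
proof -
  obtain v where v: "v \<in> S" "(a,b) \<in> v" "v \<subseteq> R" using atom_of[OF cc R ab] by blast
  have vc: "converse v \<in> S" using cc_conv[OF cc v(1)] .
  have fin: "finite \<Omega>" using cc by (rule cc_fin)
  have eq: "card {g. (a,g)\<in>v \<and> (g,a)\<in>converse v} = card {g. (a',g)\<in>v \<and> (g,a')\<in>converse v}"
    by (rule cc_coh[OF cc v(1) vc X(1)]) (use X in auto)
  have "{g. (a,g)\<in>v \<and> (g,a)\<in>converse v} \<subseteq> \<Omega>" using cc_sub[OF cc v(1)] by auto
  then have "finite {g. (a,g)\<in>v \<and> (g,a)\<in>converse v}" using fin finite_subset by blast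
  moreover have "b \<in> {g. (a,g)\<in>v \<and> (g,a)\<in>converse v}" using v by auto
  ultimately have "card {g. (a,g)\<in>v \<and> (g,a)\<in>converse v} \<noteq> 0" by auto
  then have "{g. (a',g)\<in>v \<and> (g,a')\<in>converse v} \<noteq> {}" using eq by (metis card.empty)
  then obtain g where g: "(a',g) \<in> v" by auto
  have "g \<in> {b}" by (rule L1b[OF cc v(1) v(2) g b]) simp
  then show ?thesis using g v by auto
qed

lemma LemA':
  assumes cc: "coherent_configuration \<Omega> S" and R: "R \<in> rels S"
    and b: "Id_on {b} \<in> S" and X: "Id_on X \<in> S" "a \<in> X" "a' \<in> X" and ab: "(b,a) \<in> R"
  shows "(b,a') \<in> R"
proof -
  obtain v where v: "v \<in> S" "(b,a) \<in> v" "v \<subseteq> R" using atom_of[OF cc R ab] by blast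
  have vc: "converse v \<in> S" using cc_conv[OF cc v(1)] .
  have fin: "finite \<Omega>" using cc by (rule cc_fin)
  have eq: "card {g. (a,g)\<in>converse v \<and> (g,a)\<in>v} = card {g. (a',g)\<in>converse v \<and> (g,a')\<in>v}"
    by (rule cc_coh[OF cc vc v(1) X(1)]) (use X in auto)
  have "{g. (a,g)\<in>converse v \<and> (g,a)\<in>v} \<subseteq> \<Omega>" using cc_sub[OF cc v(1)] by auto
  then have "finite {g. (a,g)\<in>converse v \<and> (g,a)\<in>v}" using fin finite_subset by blast
  moreover have "b \<in> {g. (a,g)\<in>converse v \<and> (g,a)\<in>v}" using v by auto
  ultimately have "card {g. (a,g)\<in>converse v \<and> (g,a)\<in>v} \<noteq> 0" by auto
  then have "{g. (a',g)\<in>converse v \<and> (g,a')\<in>v} \<noteq> {}" using eq by (metis card.empty)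
  then obtain g where g: "(g,a') \<in> v" by auto
  have "g \<in> {b}" by (rule L1a[OF cc v(1) v(2) g b]) simp
  then show ?thesis using g v by auto
qed

lemma singleton_rels:
  assumes part: "is_partition_of X S" and p: "{p} \<in> rels S"
  shows "{p} \<in> S"
proof -
  have "p \<in> X" using p rels_char[OF part] by blast
  then obtain u where u: "u \<in> S" "p \<in> u" using part_cover[OF part] by blast
  then have "u \<subseteq> {p}" using p rels_char[OF part, of "{p}"] by blast
  then have "u = {p}" using u by blast
  then show ?thesis using u by simp
qed

lemma complete_from_fibers:
  assumes cc: "coherent_configuration \<Omega> S" and F: "\<forall>x\<in>\<Omega>. Id_on {x} \<in> S"
  shows "complete_cc \<Omega> S"
  unfolding complete_cc_def
proof (intro conjI ballI)
  show "coherent_configuration \<Omega> S" by (rule cc)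
  fix s assume s: "s \<in> S"
  obtain p where p: "p \<in> s" using part_ne[OF cc_part[OF cc] s] by blast
  obtain a b where ab: "p = (a,b)" by (cases p) auto
  have ab2: "(a,b) \<in> s" using p ab by simp
  have "a \<in> \<Omega>" "b \<in> \<Omega>" using cc_sub[OF cc s] ab2 by auto
  have "q = (a,b)" if q: "q \<in> s" for q
  proof -
    obtain a' b' where q': "q = (a',b')" by (cases q) auto
    have "a' \<in> {a}" by (rule L1a[OF cc s ab2 q[unfolded q']]) (use F \<open>a \<in> \<Omega>\<close> in auto)
    moreover have "b' \<in> {b}" by (rule L1b[OF cc s ab2 q[unfolded q']]) (use F \<open>b \<in> \<Omega>\<close> in auto)
    ultimately show ?thesis using q' by simp
  qed
  then have "s = {(a,b)}" using ab2 by blast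
  then show "card s = 1" by simp
qed

lemma all_fibers:
  fixes D :: "int \<Rightarrow> ('x\<times>'x) set" and dist :: "'x \<Rightarrow> 'x \<Rightarrow> nat"
  assumes cc: "coherent_configuration \<Omega> S1" and \<alpha>: "\<alpha> \<in> \<Omega>" "Id_on {\<alpha>} \<in> S1"
    and Bf: "\<forall>\<beta>\<in>Br. Id_on {\<beta>} \<in> S1"
    and Drels: "\<And>k. D k \<in> rels S1"
    and Dchar: "\<And>x y k. (x,y)\<in>D k \<longleftrightarrow> x\<in>\<Omega> \<and> y\<in>\<Omega> \<and> int (dist x y) = k"
    and inj: "inj_on (\<lambda>\<gamma>. D (int (dist \<alpha> \<gamma>) - 1) `` {\<gamma>} \<inter> Br) \<Omega>"
  shows "\<forall>\<gamma>\<in>\<Omega>. Id_on {\<gamma>} \<in> S1"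
proof
  fix \<gamma> assume g: "\<gamma> \<in> \<Omega>"
  have part: "is_partition_of (\<Omega>\<times>\<Omega>) S1" using cc by (rule cc_part)
  obtain w where w: "w \<in> S1" "(\<gamma>,\<gamma>) \<in> w" "w \<subseteq> Id_on \<Omega>"
    using atom_of[OF cc cc_Id[OF cc], of "(\<gamma>,\<gamma>)"] g by auto
  define X where "X = fst ` w"
  have wX: "w = Id_on X" unfolding X_def using w(3) by (auto simp: Id_on_def) (force+)
  have XO: "X \<subseteq> \<Omega>" using w(3) wX by auto
  have gX: "\<gamma> \<in> X" using w(2) wX by auto
  have XS: "Id_on X \<in> S1" using w(1) wX by simp
  have "\<delta> = \<gamma>" if d: "\<delta> \<in> X" for \<delta>
  proof -
    let ?k = "int (dist \<alpha> \<gamma>)"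
    have "(\<alpha>,\<gamma>) \<in> D ?k" using Dchar \<alpha> g by simp
    then have "(\<alpha>,\<delta>) \<in> D ?k" by (rule LemA'[OF cc Drels \<alpha>(2) XS gX d])
    then have dd: "dist \<alpha> \<delta> = dist \<alpha> \<gamma>" using Dchar by simp
    have "D (int (dist \<alpha> \<delta>) - 1) `` {\<delta>} \<inter> Br = D (int (dist \<alpha> \<gamma>) - 1) `` {\<gamma>} \<inter> Br"
    proof -
      have "(\<delta>,\<beta>) \<in> D (?k - 1) \<longleftrightarrow> (\<gamma>,\<beta>) \<in> D (?k - 1)" if b: "\<beta> \<in> Br" for \<beta>
      proof -
        have bS: "Id_on {\<beta>} \<in> S1" using Bf b by auto
        show ?thesis using LemA[OF cc Drels bS XS d gX] LemA[OF cc Drels bS XS gX d] by blast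
      qed
      then show ?thesis using dd by auto
    qed
    then show ?thesis using inj_onD[OF inj] d XO g by auto
  qed
  then have "X = {\<gamma>}" using gX by blast
  then show "Id_on {\<gamma>} \<in> S1" using XS by simp
qed


lemma rels_crit: "(\<And>p. p \<in> R \<Longrightarrow> \<exists>s\<in>S. p \<in> s \<and> s \<subseteq> R) \<Longrightarrow> R \<in> rels S"
proof -
  assume H: "\<And>p. p \<in> R \<Longrightarrow> \<exists>s\<in>S. p \<in> s \<and> s \<subseteq> R"
  have "R = \<Union>{s\<in>S. s \<subseteq> R}" using H by blast
  then show "R \<in> rels S" unfolding rels_def by blast
qed

lemma perm_pt_length [simp]: "length (perm_pt l a) = length a"
  unfolding perm_pt_def by simp

lemma perm_pt_nth: "j < length a \<Longrightarrow> perm_pt l a ! j = a ! inv l j"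
  unfolding perm_pt_def by simp

lemma perm_pt_id: "perm_pt id a = a"
  unfolding perm_pt_def by (simp add: inv_id map_nth)

lemma perm_inv_lt:
  fixes l :: "nat \<Rightarrow> nat"
  assumes l: "l permutes {0..<m}" and j: "j < m" shows "inv l j < m"
proof -
  have "inv l permutes {0..<m}" by (rule permutes_inv[OF l])
  then have "inv l j \<in> {0..<m} \<longleftrightarrow> j \<in> {0..<m}" by (rule permutes_in_image)
  then show ?thesis using j by simp
qed

lemma dist_rel_iff:
  "(x,y) \<in> dist_rel \<Gamma> m k \<longleftrightarrow> x \<in> cart_power \<Gamma> m \<and> y \<in> cart_power \<Gamma> m \<and> int (hdist m x y) = k"
  unfolding dist_rel_def by auto

lemma perm_pt_cart:
  assumes l: "l permutes {0..<m}" and a: "a \<in> cart_power \<Gamma> m"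
  shows "perm_pt l a \<in> cart_power \<Gamma> m"
proof -
  have "set (perm_pt l a) \<subseteq> \<Gamma>"
  proof
    fix x assume "x \<in> set (perm_pt l a)"
    then obtain j where j: "j < m" "x = perm_pt l a ! j" using a unfolding cart_power_def
      by (auto simp: in_set_conv_nth)
    then have "x = a ! inv l j" using a perm_pt_nth unfolding cart_power_def by auto
    moreover have "inv l j < m" using perm_inv_lt[OF l j(1)] .
    ultimately show "x \<in> \<Gamma>" using a unfolding cart_power_def by auto
  qed
  then show ?thesis using a unfolding cart_power_def by simp
qed

lemma hdist_perm:
  assumes l: "l permutes {0..<m}" and a: "length a = m" and b: "length b = m"
  shows "hdist m (perm_pt l a) (perm_pt l b) = hdist m a b"
proof -
  have "{j. j < m \<and> perm_pt l a ! j \<noteq> perm_pt l b ! j} = l ` {i. i < m \<and> a ! i \<noteq> b ! i}"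
  proof
    show "{j. j < m \<and> perm_pt l a ! j \<noteq> perm_pt l b ! j} \<subseteq> l ` {i. i < m \<and> a ! i \<noteq> b ! i}"
    proof
      fix j assume "j \<in> {j. j < m \<and> perm_pt l a ! j \<noteq> perm_pt l b ! j}"
      then have j: "j < m" "a ! inv l j \<noteq> b ! inv l j" using a b perm_pt_nth[of j a l] perm_pt_nth[of j b l] by auto
      have "l (inv l j) = j" using permutes_inverses(1)[OF l] by simp
      moreover have "inv l j < m" using perm_inv_lt[OF l j(1)] .
      ultimately show "j \<in> l ` {i. i < m \<and> a ! i \<noteq> b ! i}"
      proof (intro image_eqI[of _ _ "inv l j"])
        show "inv l j \<in> {i. i < m \<and> a ! i \<noteq> b ! i}" using j(2) \<open>inv l j < m\<close> by simp
      qed (use \<open>l (inv l j) = j\<close> in simp)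
    qed
    show "l ` {i. i < m \<and> a ! i \<noteq> b ! i} \<subseteq> {j. j < m \<and> perm_pt l a ! j \<noteq> perm_pt l b ! j}"
    proof
      fix j assume "j \<in> l ` {i. i < m \<and> a ! i \<noteq> b ! i}"
      then obtain i where i: "i < m" "a ! i \<noteq> b ! i" "j = l i" by auto
      have "l i \<in> {0..<m}" using permutes_in_image[OF l] i(1) by simp
      then have jm: "j < m" using i by simp
      have "inv l j = i" using permutes_inverses(2)[OF l] i by simp
      then show "j \<in> {j. j < m \<and> perm_pt l a ! j \<noteq> perm_pt l b ! j}" using jm i a b perm_pt_nth[of j a l] perm_pt_nth[of j b l] by auto
    qed
  qed
  moreover have "card (l ` {i. i < m \<and> a ! i \<noteq> b ! i}) = card {i. i < m \<and> a ! i \<noteq> b ! i}"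
    by (rule card_image[OF inj_on_subset[OF permutes_inj[OF l] subset_UNIV]])
  ultimately show ?thesis unfolding hdist_def by simp
qed

lemma T_props:
  assumes cc: "coherent_configuration \<Gamma> T" and t: "t \<in> T"
  shows "t \<subseteq> \<Gamma>\<times>\<Gamma>" "t \<inter> Id_on \<Gamma> \<noteq> {} \<Longrightarrow> t \<subseteq> Id_on \<Gamma>"
proof -
  show "t \<subseteq> \<Gamma>\<times>\<Gamma>" by (rule cc_sub[OF cc t])
  have "\<forall>s\<in>T. s \<inter> Id_on \<Gamma> \<noteq> {} \<longrightarrow> s \<subseteq> Id_on \<Gamma>"
    using cc_Id[OF cc] rels_char[OF cc_part[OF cc], of "Id_on \<Gamma>"] by simp
  then show "t \<inter> Id_on \<Gamma> \<noteq> {} \<Longrightarrow> t \<subseteq> Id_on \<Gamma>" using t by simp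
qed

lemma cart_powerI: "length a = m \<Longrightarrow> (\<And>i. i < m \<Longrightarrow> a ! i \<in> \<Gamma>) \<Longrightarrow> a \<in> cart_power \<Gamma> m"
  unfolding cart_power_def by (auto simp: in_set_conv_nth)

lemma cart_powerD: "a \<in> cart_power \<Gamma> m \<Longrightarrow> i < m \<Longrightarrow> a ! i \<in> \<Gamma>"
  unfolding cart_power_def by auto

lemma cart_power_len: "a \<in> cart_power \<Gamma> m \<Longrightarrow> length a = m"
  unfolding cart_power_def by auto

lemma tensorD: "(a,b) \<in> tensor m ts \<Longrightarrow> i < m \<Longrightarrow> (a!i, b!i) \<in> ts ! i"
  unfolding tensor_def by auto

lemma tensor_len: "(a,b) \<in> tensor m ts \<Longrightarrow> length a = m \<and> length b = m"
  unfolding tensor_def by auto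

lemma tensor_cart:
  assumes cc: "coherent_configuration \<Gamma> T" and ts: "length ts = m" "set ts \<subseteq> T"
    and ab: "(a,b) \<in> tensor m ts"
  shows "a \<in> cart_power \<Gamma> m" "b \<in> cart_power \<Gamma> m"
proof -
  have len: "length a = m" "length b = m" using tensor_len[OF ab] by auto
  have ab2: "(a!i, b!i) \<in> \<Gamma>\<times>\<Gamma>" if "i < m" for i
  proof -
    have "ts ! i \<in> set ts" using ts(1) that by simp
    then have "ts ! i \<in> T" using ts(2) by blast
    then have "ts ! i \<subseteq> \<Gamma>\<times>\<Gamma>" by (rule T_props(1)[OF cc])
    moreover have "(a!i, b!i) \<in> ts ! i" by (rule tensorD[OF ab that])
    ultimately show ?thesis by blast
  qed
  show "a \<in> cart_power \<Gamma> m" by (rule cart_powerI[OF len(1)]) (use ab2 in blast)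
  show "b \<in> cart_power \<Gamma> m" by (rule cart_powerI[OF len(2)]) (use ab2 in blast)
qed

lemma perm_rel_E: "p \<in> perm_rel l t \<Longrightarrow> \<exists>a b. (a,b)\<in>t \<and> p = (perm_pt l a, perm_pt l b)"
  unfolding perm_rel_def by auto

lemma perm_rel_I: "(a,b) \<in> t \<Longrightarrow> (perm_pt l a, perm_pt l b) \<in> perm_rel l t"
  unfolding perm_rel_def by (rule image_eqI[where x="(a,b)"]) auto

lemma disj_Id: "t \<inter> Id_on \<Gamma> = {} \<Longrightarrow> t \<subseteq> \<Gamma>\<times>\<Gamma> \<Longrightarrow> (x,y)\<in>t \<Longrightarrow> x \<noteq> y"
proof
  assume H: "t \<inter> Id_on \<Gamma> = {}" "t \<subseteq> \<Gamma>\<times>\<Gamma>" "(x,y)\<in>t" "x = y"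
  then have "(x,y) \<in> Id_on \<Gamma>" by auto
  then show False using H by blast
qed

lemma tensor_hdist:
  assumes cc: "coherent_configuration \<Gamma> T" and ts: "length ts = m" "set ts \<subseteq> T"
    and ab: "(a,b) \<in> tensor m ts" and ab': "(a',b') \<in> tensor m ts"
  shows "hdist m a b = hdist m a' b'"
proof -
  have "(a!i \<noteq> b!i) \<longleftrightarrow> (a'!i \<noteq> b'!i)" if i: "i < m" for i
  proof -
    have "ts ! i \<in> set ts" using ts(1) i by simp
    then have t: "ts ! i \<in> T" using ts(2) by blast
    have 1: "(a!i, b!i) \<in> ts ! i" "(a'!i, b'!i) \<in> ts ! i" using tensorD[OF ab i] tensorD[OF ab' i] by auto
    show ?thesis
    proof (cases "ts ! i \<inter> Id_on \<Gamma> = {}")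
      case True
      then show ?thesis using disj_Id[OF True T_props(1)[OF cc t] 1(1)] disj_Id[OF True T_props(1)[OF cc t] 1(2)] by blast
    next
      case False
      then have "ts ! i \<subseteq> Id_on \<Gamma>" using T_props(2)[OF cc t] by blast
      then have "a!i = b!i" "a'!i = b'!i" using 1 by auto
      then show ?thesis by simp
    qed
  qed
  then have "{i. i < m \<and> a ! i \<noteq> b ! i} = {i. i < m \<and> a' ! i \<noteq> b' ! i}" by blast
  then show ?thesis unfolding hdist_def by simp
qed

lemma exp_E:
  assumes "p \<in> s" "s \<in> exp_rels T m L"
  obtains ts l a b where "length ts = m" "set ts \<subseteq> T" "l \<in> L" "(a,b) \<in> tensor m ts"
    "p = (perm_pt l a, perm_pt l b)"
proof -
  obtain ts where ts: "length ts = m" "set ts \<subseteq> T" "s = (\<Union>l\<in>L. perm_rel l (tensor m ts))"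
    using assms(2) unfolding exp_rels_def by blast
  then obtain l where l: "l \<in> L" "p \<in> perm_rel l (tensor m ts)" using assms(1) by blast
  then obtain a b where "(a,b) \<in> tensor m ts" "p = (perm_pt l a, perm_pt l b)" using perm_rel_E by blast
  then show ?thesis using that ts l by blast
qed

lemma exp_sub:
  assumes cc: "coherent_configuration \<Gamma> T" and L: "perm_group_on {0..<m} L"
  shows "\<Union>(exp_rels T m L) \<subseteq> cart_power \<Gamma> m \<times> cart_power \<Gamma> m"
proof
  fix p assume "p \<in> \<Union>(exp_rels T m L)"
  then obtain s where s: "p \<in> s" "s \<in> exp_rels T m L" by blast
  obtain ts l a b where ts: "length ts = m" "set ts \<subseteq> T" and l: "l \<in> L"
    and q: "(a,b) \<in> tensor m ts" and pq: "p = (perm_pt l a, perm_pt l b)"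
    using exp_E[OF s] by blast
  have lp: "l permutes {0..<m}" using L l unfolding perm_group_on_def by auto
  show "p \<in> cart_power \<Gamma> m \<times> cart_power \<Gamma> m"
    using pq perm_pt_cart[OF lp] tensor_cart[OF cc ts q] by auto
qed

lemma dist_in_exp:
  assumes cc: "coherent_configuration \<Gamma> T" and L: "perm_group_on {0..<m} L"
  shows "dist_rel \<Gamma> m k \<in> rels (exp_rels T m L)"
proof (rule rels_crit)
  fix p assume p: "p \<in> dist_rel \<Gamma> m k"
  obtain a b where ab: "p = (a,b)" by (cases p) auto
  have "(a,b) \<in> dist_rel \<Gamma> m k" using p ab by simp
  then have abO': "a \<in> cart_power \<Gamma> m \<and> b \<in> cart_power \<Gamma> m \<and> int (hdist m a b) = k"
    by (simp only: dist_rel_iff)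
  then have abO: "a \<in> cart_power \<Gamma> m" "b \<in> cart_power \<Gamma> m" "int (hdist m a b) = k"
    by auto
  have ex: "\<exists>t. t \<in> T \<and> (a!i, b!i) \<in> t" if i: "i < m" for i
  proof -
    have "(a!i, b!i) \<in> \<Gamma>\<times>\<Gamma>" using cart_powerD[OF abO(1) i] cart_powerD[OF abO(2) i] by simp
    then show ?thesis using part_cover[OF cc_part[OF cc]] by blast
  qed
  define ts where "ts = map (\<lambda>i. SOME t. t \<in> T \<and> (a!i, b!i) \<in> t) [0..<m]"
  have tsi: "ts ! i \<in> T \<and> (a!i, b!i) \<in> ts ! i" if i: "i < m" for i
    unfolding ts_def using someI_ex[OF ex[OF i]] i by simp
  have ts1: "length ts = m" unfolding ts_def by simp
  have ts2: "set ts \<subseteq> T"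
  proof
    fix t assume "t \<in> set ts"
    then obtain i where "i < length ts" "t = ts ! i" by (metis in_set_conv_nth)
    then show "t \<in> T" using tsi ts1 by simp
  qed
  have abt: "(a,b) \<in> tensor m ts"
    unfolding tensor_def using cart_power_len[OF abO(1)] cart_power_len[OF abO(2)] tsi by simp
  let ?s = "\<Union>l\<in>L. perm_rel l (tensor m ts)"
  have s1: "?s \<in> exp_rels T m L" unfolding exp_rels_def using ts1 ts2 by blast
  have s2: "p \<in> ?s"
  proof -
    have "id \<in> L" using L unfolding perm_group_on_def by auto
    moreover have "p \<in> perm_rel id (tensor m ts)"
      using perm_rel_I[OF abt, of id] ab by (simp add: perm_pt_id)
    ultimately show ?thesis by blast
  qed
  have s3: "?s \<subseteq> dist_rel \<Gamma> m k"
  proof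
    fix x assume "x \<in> ?s"
    then obtain l where l: "l \<in> L" "x \<in> perm_rel l (tensor m ts)" by blast
    then obtain a' b' where q: "(a',b') \<in> tensor m ts" and xq: "x = (perm_pt l a', perm_pt l b')"
      using perm_rel_E by blast
    have lp: "l permutes {0..<m}" using L l unfolding perm_group_on_def by auto
    have c: "a' \<in> cart_power \<Gamma> m" "b' \<in> cart_power \<Gamma> m" using tensor_cart[OF cc ts1 ts2 q] by auto
    have "hdist m (perm_pt l a') (perm_pt l b') = hdist m a' b'"
      using hdist_perm[OF lp cart_power_len[OF c(1)] cart_power_len[OF c(2)]] .
    also have "\<dots> = hdist m a b" using tensor_hdist[OF cc ts1 ts2 q abt] .
    finally have "int (hdist m (perm_pt l a') (perm_pt l b')) = k" using abO(3) by simp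
    then have "(perm_pt l a', perm_pt l b') \<in> dist_rel \<Gamma> m k"
      using perm_pt_cart[OF lp c(1)] perm_pt_cart[OF lp c(2)] by (simp only: dist_rel_iff)
    then show "x \<in> dist_rel \<Gamma> m k" using xq by simp
  qed
  show "\<exists>s\<in>exp_rels T m L. p \<in> s \<and> s \<subseteq> dist_rel \<Gamma> m k"
    using s1 s2 s3 by (intro bexI[where x="?s"] conjI)
qed


lemma upd_nth: "i < m \<Longrightarrow> (replicate m g)[j:=x] ! i = (if i = j then x else g)"
  by (simp add: nth_list_update)

lemma hd_alpha: "length \<beta> = m \<Longrightarrow> hdist m (replicate m g) \<beta> = card {i. i<m \<and> \<beta>!i \<noteq> g}"
  unfolding hdist_def by (rule arg_cong[where f=card]) auto

lemma upd_cart: "j < m \<Longrightarrow> x \<in> \<Gamma> \<Longrightarrow> g \<in> \<Gamma> \<Longrightarrow> (replicate m g)[j:=x] \<in> cart_power \<Gamma> m"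
  by (rule cart_powerI) (auto simp: nth_list_update)

lemma alpha_cart: "g \<in> \<Gamma> \<Longrightarrow> replicate m g \<in> cart_power \<Gamma> m"
  by (rule cart_powerI) auto

lemma ar_char:
  assumes g: "g \<in> \<Gamma>"
  shows "\<delta> \<in> dist_rel \<Gamma> m 1 `` {replicate m g} \<longleftrightarrow> (\<exists>j<m. \<exists>x\<in>\<Gamma>. x \<noteq> g \<and> \<delta> = (replicate m g)[j:=x])"
proof
  assume "\<delta> \<in> dist_rel \<Gamma> m 1 `` {replicate m g}"
  then have "(replicate m g, \<delta>) \<in> dist_rel \<Gamma> m 1" by simp
  then have d: "\<delta> \<in> cart_power \<Gamma> m" "hdist m (replicate m g) \<delta> = 1" by (simp_all add: dist_rel_iff)
  have len: "length \<delta> = m" using cart_power_len[OF d(1)] .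
  have "card {i. i<m \<and> \<delta>!i \<noteq> g} = 1" using d(2) hd_alpha[OF len] by simp
  then obtain j where j: "{i. i<m \<and> \<delta>!i \<noteq> g} = {j}" using card_1_singleton_iff by (metis One_nat_def)
  then have jm: "j < m" "\<delta>!j \<noteq> g" by auto
  have "\<delta> = (replicate m g)[j:=\<delta>!j]"
  proof (rule nth_equalityI)
    show "length \<delta> = length ((replicate m g)[j:=\<delta>!j])" using len by simp
    fix i assume "i < length \<delta>"
    then have i: "i < m" using len by simp
    show "\<delta> ! i = (replicate m g)[j:=\<delta>!j] ! i"
    proof (cases "i = j")
      case True then show ?thesis using i by (simp add: nth_list_update)
    next
      case False
      then have "i \<notin> {i. i<m \<and> \<delta>!i \<noteq> g}" using j by blast
      then have "\<delta>!i = g" using i by simp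
      then show ?thesis using i False by (simp add: nth_list_update)
    qed
  qed
  moreover have "\<delta>!j \<in> \<Gamma>" using cart_powerD[OF d(1) jm(1)] .
  ultimately show "\<exists>j<m. \<exists>x\<in>\<Gamma>. x \<noteq> g \<and> \<delta> = (replicate m g)[j:=x]" using jm by blast
next
  assume "\<exists>j<m. \<exists>x\<in>\<Gamma>. x \<noteq> g \<and> \<delta> = (replicate m g)[j:=x]"
  then obtain j x where jx: "j < m" "x \<in> \<Gamma>" "x \<noteq> g" "\<delta> = (replicate m g)[j:=x]" by blast
  have dc: "\<delta> \<in> cart_power \<Gamma> m" using upd_cart[OF jx(1,2) g] jx(4) by simp
  have "{i. i<m \<and> \<delta>!i \<noteq> g} = {j}" using jx by (auto simp: nth_list_update)
  then have "hdist m (replicate m g) \<delta> = 1" using hd_alpha[OF cart_power_len[OF dc]] by simp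
  then have "(replicate m g, \<delta>) \<in> dist_rel \<Gamma> m 1" using dc alpha_cart[OF g] by (simp add: dist_rel_iff)
  then show "\<delta> \<in> dist_rel \<Gamma> m 1 `` {replicate m g}" by simp
qed

lemma hd_key:
  assumes b: "\<beta> \<in> cart_power \<Gamma> m" and j: "j < m" and x: "x \<noteq> g"
  shows "int (hdist m \<beta> ((replicate m g)[j:=x])) = int (card {i. i<m \<and> \<beta>!i \<noteq> g}) - 1
     \<longleftrightarrow> \<beta>!j \<noteq> g \<and> x = \<beta>!j"
proof -
  define E where "E = {i. i<m \<and> \<beta>!i \<noteq> (replicate m g)[j:=x]!i}"
  define sp where "sp = {i. i<m \<and> \<beta>!i \<noteq> g}"
  have finsp: "finite sp" unfolding sp_def by simp
  have finE: "finite E" unfolding E_def by simp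
  have hE: "hdist m \<beta> ((replicate m g)[j:=x]) = card E" unfolding hdist_def E_def by simp
  show ?thesis
  proof (cases "x = \<beta>!j")
    case True
    have "E = sp - {j}"
    proof (rule set_eqI)
      fix i show "i \<in> E \<longleftrightarrow> i \<in> sp - {j}"
      proof (cases "i < m")
        case im: True
        then have "(replicate m g)[j:=x]!i = (if i=j then x else g)" by (rule upd_nth)
        then show ?thesis unfolding E_def sp_def using im True by auto
      next
        case False then show ?thesis unfolding E_def sp_def by auto
      qed
    qed
    moreover have "j \<in> sp" unfolding sp_def using j x True by simp
    ultimately have "card E = card sp - 1" using finsp by simp
    moreover have "card sp \<ge> 1" using \<open>j \<in> sp\<close> finsp by (metis One_nat_def card_0_eq empty_iff less_one not_le)
    ultimately show ?thesis using hE True x unfolding sp_def by simp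
  next
    case False
    have "sp \<subseteq> E"
    proof
      fix i assume i: "i \<in> sp"
      then have im: "i < m" "\<beta>!i \<noteq> g" unfolding sp_def by auto
      have "(replicate m g)[j:=x]!i = (if i=j then x else g)" by (rule upd_nth[OF im(1)])
      then show "i \<in> E" unfolding E_def using im False by auto
    qed
    then have "card sp \<le> card E" using finE by (rule card_mono[rotated])
    then show ?thesis using hE False unfolding sp_def by simp
  qed
qed

definition rho where
  "rho \<Gamma> m g \<beta> = dist_rel \<Gamma> m (int (hdist m (replicate m g) \<beta>) - 1) `` {\<beta>} \<inter> dist_rel \<Gamma> m 1 `` {replicate m g}"

lemma rho_char:
  assumes b: "\<beta> \<in> cart_power \<Gamma> m" and g: "g \<in> \<Gamma>"
  shows "rho \<Gamma> m g \<beta> = {(replicate m g)[j:=\<beta>!j] | j. j<m \<and> \<beta>!j \<noteq> g}"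
proof
  have hb: "hdist m (replicate m g) \<beta> = card {i. i<m \<and> \<beta>!i \<noteq> g}" using hd_alpha[OF cart_power_len[OF b]] .
  show "rho \<Gamma> m g \<beta> \<subseteq> {(replicate m g)[j:=\<beta>!j] | j. j<m \<and> \<beta>!j \<noteq> g}"
  proof
    fix \<delta> assume d: "\<delta> \<in> rho \<Gamma> m g \<beta>"
    then have d1: "\<delta> \<in> dist_rel \<Gamma> m 1 `` {replicate m g}"
      and d2: "(\<beta>, \<delta>) \<in> dist_rel \<Gamma> m (int (hdist m (replicate m g) \<beta>) - 1)"
      unfolding rho_def by auto
    obtain j x where jx: "j < m" "x \<in> \<Gamma>" "x \<noteq> g" "\<delta> = (replicate m g)[j:=x]"
      using d1 ar_char[OF g] by blast
    have "int (hdist m \<beta> \<delta>) = int (card {i. i<m \<and> \<beta>!i \<noteq> g}) - 1"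
      using d2 hb by (simp add: dist_rel_iff)
    then have "\<beta>!j \<noteq> g \<and> x = \<beta>!j" using hd_key[OF b jx(1) jx(3)] jx(4) by simp
    then show "\<delta> \<in> {(replicate m g)[j:=\<beta>!j] | j. j<m \<and> \<beta>!j \<noteq> g}" using jx by blast
  qed
  show "{(replicate m g)[j:=\<beta>!j] | j. j<m \<and> \<beta>!j \<noteq> g} \<subseteq> rho \<Gamma> m g \<beta>"
  proof
    fix \<delta> assume "\<delta> \<in> {(replicate m g)[j:=\<beta>!j] | j. j<m \<and> \<beta>!j \<noteq> g}"
    then obtain j where j: "j < m" "\<beta>!j \<noteq> g" "\<delta> = (replicate m g)[j:=\<beta>!j]" by blast
    have bj: "\<beta>!j \<in> \<Gamma>" using cart_powerD[OF b j(1)] .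
    have d1: "\<delta> \<in> dist_rel \<Gamma> m 1 `` {replicate m g}" using ar_char[OF g] j bj by blast
    have dc: "\<delta> \<in> cart_power \<Gamma> m" using upd_cart[OF j(1) bj g] j(3) by simp
    have "int (hdist m \<beta> \<delta>) = int (card {i. i<m \<and> \<beta>!i \<noteq> g}) - 1"
      using hd_key[OF b j(1) j(2)] j by simp
    then have "(\<beta>, \<delta>) \<in> dist_rel \<Gamma> m (int (hdist m (replicate m g) \<beta>) - 1)"
      using b dc hb by (simp add: dist_rel_iff)
    then show "\<delta> \<in> rho \<Gamma> m g \<beta>" using d1 unfolding rho_def by simp
  qed
qed

lemma rho_aux:
  assumes b: "\<beta> \<in> cart_power \<Gamma> m" and b': "\<beta>' \<in> cart_power \<Gamma> m" and g: "g \<in> \<Gamma>"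
    and eq: "rho \<Gamma> m g \<beta> = rho \<Gamma> m g \<beta>'" and j: "j < m" "\<beta>'!j \<noteq> g"
  shows "\<beta>!j = \<beta>'!j"
proof -
  have "(replicate m g)[j:=\<beta>'!j] \<in> rho \<Gamma> m g \<beta>'" using rho_char[OF b' g] j by blast
  then have "(replicate m g)[j:=\<beta>'!j] \<in> rho \<Gamma> m g \<beta>" using eq by simp
  then obtain i where i: "i < m" "\<beta>!i \<noteq> g" "(replicate m g)[j:=\<beta>'!j] = (replicate m g)[i:=\<beta>!i]"
    using rho_char[OF b g] by blast
  have "(replicate m g)[j:=\<beta>'!j] ! j = (replicate m g)[i:=\<beta>!i] ! j" using i(3) by simp
  then have "\<beta>'!j = (if j = i then \<beta>!i else g)" using j(1) i(1) by (simp add: nth_list_update)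
  then show ?thesis using j(2) by (auto split: if_splits)
qed

lemma rho_inj:
  assumes g: "g \<in> \<Gamma>"
  shows "inj_on (rho \<Gamma> m g) (cart_power \<Gamma> m)"
proof (rule inj_onI)
  fix \<beta> \<beta>' assume b: "\<beta> \<in> cart_power \<Gamma> m" and b': "\<beta>' \<in> cart_power \<Gamma> m"
    and eq: "rho \<Gamma> m g \<beta> = rho \<Gamma> m g \<beta>'"
  show "\<beta> = \<beta>'"
  proof (rule nth_equalityI)
    show "length \<beta> = length \<beta>'" using cart_power_len[OF b] cart_power_len[OF b'] by simp
    fix j assume "j < length \<beta>"
    then have j: "j < m" using cart_power_len[OF b] by simp
    show "\<beta>!j = \<beta>'!j"
    proof (cases "\<beta>'!j = g")
      case False then show ?thesis using rho_aux[OF b b' g eq j] by simp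
    next
      case True
      show ?thesis
      proof (cases "\<beta>!j = g")
        case True then show ?thesis using \<open>\<beta>'!j = g\<close> by simp
      next
        case False then show ?thesis using rho_aux[OF b' b g eq[symmetric] j] by simp
      qed
    qed
  qed
qed


lemma finite_cart: "finite \<Gamma> \<Longrightarrow> finite (cart_power \<Gamma> m)"
proof -
  assume "finite \<Gamma>"
  then have "finite {xs. set xs \<subseteq> \<Gamma> \<and> length xs = m}" by (rule finite_lists_length_eq)
  moreover have "cart_power \<Gamma> m = {xs. set xs \<subseteq> \<Gamma> \<and> length xs = m}" unfolding cart_power_def by auto
  ultimately show ?thesis by simp
qed

lemma ar_sub: "\<delta> \<in> dist_rel \<Gamma> m 1 `` {a} \<Longrightarrow> \<delta> \<in> cart_power \<Gamma> m \<and> hdist m a \<delta> = 1"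
proof -
  assume "\<delta> \<in> dist_rel \<Gamma> m 1 `` {a}"
  then have "(a, \<delta>) \<in> dist_rel \<Gamma> m 1" by simp
  then show ?thesis by (simp add: dist_rel_iff)
qed

lemma rho_image:
  assumes g: "g \<in> \<Gamma>" and fin: "finite \<Gamma>"
  shows "rho \<Gamma> m g ` cart_power \<Gamma> m = {\<Lambda>. \<Lambda> \<subseteq> dist_rel \<Gamma> m 1 `` {replicate m g} \<and>
     (\<forall>i<m. card (\<Lambda> \<inter> {\<beta>\<in>cart_power \<Gamma> m. hdist m (replicate m g) \<beta> = 1 \<and> \<beta>!i \<noteq> g}) \<le> 1)}"
    (is "_ = {\<Lambda>. \<Lambda> \<subseteq> ?ar \<and> (\<forall>i<m. card (\<Lambda> \<inter> ?G i) \<le> 1)}")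
proof
  have finO: "finite (cart_power \<Gamma> m)" using finite_cart[OF fin] .
  show "rho \<Gamma> m g ` cart_power \<Gamma> m \<subseteq> {\<Lambda>. \<Lambda> \<subseteq> ?ar \<and> (\<forall>i<m. card (\<Lambda> \<inter> ?G i) \<le> 1)}"
  proof
    fix \<Lambda> assume "\<Lambda> \<in> rho \<Gamma> m g ` cart_power \<Gamma> m"
    then obtain \<beta> where b: "\<beta> \<in> cart_power \<Gamma> m" "\<Lambda> = rho \<Gamma> m g \<beta>" by blast
    have "\<Lambda> \<subseteq> ?ar" unfolding b(2) rho_def by (rule Int_lower2)
    moreover have "card (\<Lambda> \<inter> ?G i) \<le> 1" if i: "i < m" for i
    proof -
      have "\<Lambda> \<inter> ?G i \<subseteq> {(replicate m g)[i:=\<beta>!i]}"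
      proof
        fix \<delta> assume d: "\<delta> \<in> \<Lambda> \<inter> ?G i"
        then obtain j where j: "j < m" "\<beta>!j \<noteq> g" "\<delta> = (replicate m g)[j:=\<beta>!j]"
          using rho_char[OF b(1) g] b(2) by blast
        have "\<delta>!i \<noteq> g" using d by blast
        moreover have "\<delta>!i = (if i = j then \<beta>!j else g)" using upd_nth[OF i, of g j "\<beta>!j"] j(3) by simp
        ultimately have "i = j" by (cases "i = j") auto
        then show "\<delta> \<in> {(replicate m g)[i:=\<beta>!i]}" using j by simp
      qed
      then have "card (\<Lambda> \<inter> ?G i) \<le> card {(replicate m g)[i:=\<beta>!i]}" by (rule card_mono[rotated]) simp
      then show ?thesis by simp
    qed
    ultimately have "\<Lambda> \<subseteq> ?ar \<and> (\<forall>i<m. card (\<Lambda> \<inter> ?G i) \<le> 1)" by blast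
    then show "\<Lambda> \<in> {\<Lambda>. \<Lambda> \<subseteq> ?ar \<and> (\<forall>i<m. card (\<Lambda> \<inter> ?G i) \<le> 1)}" by (rule CollectI)
  qed
  show "{\<Lambda>. \<Lambda> \<subseteq> ?ar \<and> (\<forall>i<m. card (\<Lambda> \<inter> ?G i) \<le> 1)} \<subseteq> rho \<Gamma> m g ` cart_power \<Gamma> m"
  proof
    fix \<Lambda> assume "\<Lambda> \<in> {\<Lambda>. \<Lambda> \<subseteq> ?ar \<and> (\<forall>i<m. card (\<Lambda> \<inter> ?G i) \<le> 1)}"
    then have L1: "\<Lambda> \<subseteq> ?ar" and L2: "\<And>i. i < m \<Longrightarrow> card (\<Lambda> \<inter> ?G i) \<le> 1" by auto
    have LO: "\<delta> \<in> cart_power \<Gamma> m \<and> hdist m (replicate m g) \<delta> = 1" if "\<delta> \<in> \<Lambda>" for \<delta>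
      using ar_sub L1 that by blast
    have uniq: "\<delta> = \<delta>'" if i: "i < m" and d: "\<delta> \<in> \<Lambda>" "\<delta>' \<in> \<Lambda>" "\<delta>!i \<noteq> g" "\<delta>'!i \<noteq> g"
      for i \<delta> \<delta>'
    proof -
      define X where "X = \<Lambda> \<inter> ?G i"
      have "finite X" unfolding X_def using finO by (rule finite_subset[rotated]) blast
      moreover have "card X \<le> Suc 0" using L2[OF i] unfolding X_def by simp
      ultimately have all: "\<forall>a1\<in>X. \<forall>a2\<in>X. a1 = a2" using card_le_Suc0_iff_eq by blast
      have "\<delta> \<in> X" "\<delta>' \<in> X" unfolding X_def using d LO by auto
      then show ?thesis using all by blast
    qed
    define c where "c i = (SOME \<delta>. \<delta> \<in> \<Lambda> \<and> \<delta>!i \<noteq> g)" for i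
    have cprop: "c i \<in> \<Lambda> \<and> c i ! i \<noteq> g" if "\<exists>\<delta>\<in>\<Lambda>. \<delta>!i \<noteq> g" for i
    proof -
      have "\<exists>\<delta>. \<delta> \<in> \<Lambda> \<and> \<delta>!i \<noteq> g" using that by blast
      then show ?thesis unfolding c_def by (rule someI_ex)
    qed
    define \<beta> where "\<beta> = map (\<lambda>i. if \<exists>\<delta>\<in>\<Lambda>. \<delta>!i \<noteq> g then c i ! i else g) [0..<m]"
    have bi: "\<beta>!i = (if \<exists>\<delta>\<in>\<Lambda>. \<delta>!i \<noteq> g then c i ! i else g)" if "i < m" for i
      unfolding \<beta>_def using that by simp
    have bO: "\<beta> \<in> cart_power \<Gamma> m"
    proof (rule cart_powerI)
      show "length \<beta> = m" unfolding \<beta>_def by simp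
      fix i assume i: "i < m"
      show "\<beta>!i \<in> \<Gamma>"
      proof (cases "\<exists>\<delta>\<in>\<Lambda>. \<delta>!i \<noteq> g")
        case True
        then have "c i \<in> \<Lambda>" using cprop by blast
        then have "c i \<in> cart_power \<Gamma> m" using LO by blast
        then show ?thesis using bi[OF i] True cart_powerD[OF _ i] by simp
      next
        case False then show ?thesis using bi[OF i] g by simp
      qed
    qed
    have ar_form: "\<exists>j<m. \<exists>x\<in>\<Gamma>. x \<noteq> g \<and> \<delta> = (replicate m g)[j:=x]" if "\<delta> \<in> \<Lambda>" for \<delta>
      using ar_char[OF g] L1 that by blast
    have "rho \<Gamma> m g \<beta> = \<Lambda>"
    proof
      show "rho \<Gamma> m g \<beta> \<subseteq> \<Lambda>"
      proof
        fix \<delta> assume "\<delta> \<in> rho \<Gamma> m g \<beta>"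
        then obtain j where j: "j < m" "\<beta>!j \<noteq> g" "\<delta> = (replicate m g)[j:=\<beta>!j]"
          using rho_char[OF bO g] by blast
        have ex: "\<exists>\<delta>\<in>\<Lambda>. \<delta>!j \<noteq> g"
        proof (rule ccontr)
          assume "\<not> (\<exists>\<delta>\<in>\<Lambda>. \<delta>!j \<noteq> g)"
          then have "\<beta>!j = g" using bi[OF j(1)] by simp
          then show False using j(2) by simp
        qed
        then have bj: "\<beta>!j = c j ! j" using bi[OF j(1)] by simp
        have cj: "c j \<in> \<Lambda>" "c j ! j \<noteq> g" using cprop[OF ex] by auto
        obtain k y where ky: "k < m" "y \<in> \<Gamma>" "y \<noteq> g" "c j = (replicate m g)[k:=y]"
          using ar_form[OF cj(1)] by blast
        have "c j ! j = (if j = k then y else g)" using upd_nth[OF j(1), of g k y] ky(4) by simp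
        then have "k = j" "y = c j ! j" using cj(2) by (cases "j = k"; simp)+
        then have "c j = \<delta>" using ky(4) j(3) bj by simp
        then show "\<delta> \<in> \<Lambda>" using cj(1) by simp
      qed
      show "\<Lambda> \<subseteq> rho \<Gamma> m g \<beta>"
      proof
        fix \<delta> assume d: "\<delta> \<in> \<Lambda>"
        obtain j x where jx: "j < m" "x \<in> \<Gamma>" "x \<noteq> g" "\<delta> = (replicate m g)[j:=x]"
          using ar_form[OF d] by blast
        have dj: "\<delta>!j = x" using upd_nth[OF jx(1), of g j x] jx(4) by simp
        have ex: "\<exists>\<delta>\<in>\<Lambda>. \<delta>!j \<noteq> g" using d dj jx(3) by blast
        have cj: "c j \<in> \<Lambda>" "c j ! j \<noteq> g" using cprop[OF ex] by auto
        have "\<delta>!j \<noteq> g" using dj jx(3) by simp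
        then have "c j = \<delta>" by (rule uniq[OF jx(1) cj(1) d cj(2)])
        then have bj: "\<beta>!j = x" using bi[OF jx(1)] ex dj by simp
        have "\<delta> \<in> {(replicate m g)[j:=\<beta>!j] | j. j<m \<and> \<beta>!j \<noteq> g}" using jx bj by blast
        then show "\<delta> \<in> rho \<Gamma> m g \<beta>" using rho_char[OF bO g] by simp
      qed
    qed
    then show "\<Lambda> \<in> rho \<Gamma> m g ` cart_power \<Gamma> m" using bO by blast
  qed
qed

theorem lemma7p2:
  fixes \<Gamma> :: "'a set" and T :: "('a \<times> 'a) set set" and m :: nat
    and L :: "(nat \<Rightarrow> nat) set" and \<gamma>\<^sub>0 :: 'a
  assumes "coherent_configuration \<Gamma> T"
    and "m \<ge> 1"
    and "perm_group_on {0..<m} L"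
    and "\<gamma>\<^sub>0 \<in> \<Gamma>"
  shows "let \<Omega> = cart_power \<Gamma> m; S = exp_rels T m L;
             \<alpha> = replicate m \<gamma>\<^sub>0;
             r = dist_rel \<Gamma> m;
             \<alpha>r = r 1 `` {\<alpha>};
             Gam = (\<lambda>i. {\<beta>\<in>\<Omega>. hdist m \<alpha> \<beta> = 1 \<and> \<beta> ! i \<noteq> \<gamma>\<^sub>0});
             \<rho> = (\<lambda>\<beta>. r (int (hdist m \<alpha> \<beta>) - 1) `` {\<beta>} \<inter> \<alpha>r)
         in inj_on \<rho> \<Omega> \<and>
            \<rho> ` \<Omega> = {\<Lambda>. \<Lambda> \<subseteq> \<alpha>r \<and> (\<forall>i<m. card (\<Lambda> \<inter> Gam i) \<le> 1)} \<and>
            is_base \<Omega> (point_extension \<Omega> S \<alpha>) \<alpha>r"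
proof -
  note cc = assms(1) and L = assms(3) and g = assms(4)
  have finG: "finite \<Gamma>" using cc by (rule cc_fin)
  define \<Omega> where "\<Omega> = cart_power \<Gamma> m"
  define S where "S = exp_rels T m L"
  define \<alpha> where "\<alpha> = replicate m \<gamma>\<^sub>0"
  define ar where "ar = dist_rel \<Gamma> m 1 `` {\<alpha>}"
  have finO: "finite \<Omega>" unfolding \<Omega>_def using finite_cart[OF finG] .
  have SS: "\<Union>S \<subseteq> \<Omega>\<times>\<Omega>" unfolding S_def \<Omega>_def using exp_sub[OF cc L] .
  have aO: "\<alpha> \<in> \<Omega>" unfolding \<alpha>_def \<Omega>_def using alpha_cart[OF g] .
  have arO: "ar \<subseteq> \<Omega>" unfolding ar_def \<Omega>_def using ar_sub by blast
  have pe: "point_extension \<Omega> S \<alpha> = smallest_fission \<Omega> S (\<lambda>S'. \<forall>b\<in>{\<alpha>}. is_fiber S' {b})"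
    unfolding point_extension_def by simp
  define S0 where "S0 = point_extension \<Omega> S \<alpha>"
  have aO': "{\<alpha>} \<subseteq> \<Omega>" using aO by simp
  note sf0 = sf_props[OF finO SS aO']
  have S0a: "fission \<Omega> S0 S" using conjunct1[OF sf0] unfolding S0_def pe .
  have "\<forall>b\<in>{\<alpha>}. is_fiber S0 {b}" using conjunct1[OF conjunct2[OF sf0]] unfolding S0_def pe .
  then have S0b: "is_fiber S0 {\<alpha>}" by simp
  note S0 = S0a S0b
  have ccS0: "coherent_configuration \<Omega> S0" using S0(1) unfolding fission_def by simp
  have S0sub: "\<Union>S0 \<subseteq> \<Omega>\<times>\<Omega>" using cc_sub[OF ccS0] by blast
  define S1 where "S1 = smallest_fission \<Omega> S0 (\<lambda>S'. \<forall>b\<in>ar. is_fiber S' {b})"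
  note sf1 = sf_props[OF finO S0sub arO]
  have S1a: "fission \<Omega> S1 S0" using conjunct1[OF sf1] unfolding S1_def .
  have S1b: "\<forall>b\<in>ar. is_fiber S1 {b}" using conjunct1[OF conjunct2[OF sf1]] unfolding S1_def .
  note S1 = S1a S1b
  have ccS1: "coherent_configuration \<Omega> S1" using S1(1) unfolding fission_def by simp
  have relsS1: "rels S \<subseteq> rels S1" using S0(1) S1(1) unfolding fission_def by blast
  have Drels: "dist_rel \<Gamma> m k \<in> rels S1" for k
    using dist_in_exp[OF cc L, of k] relsS1 unfolding S_def by blast
  have "Id_on {\<alpha>} \<in> S0" using S0(2) unfolding is_fiber_def .
  then have "Id_on {\<alpha>} \<in> rels S0" by (rule in_rels)
  moreover have "rels S0 \<subseteq> rels S1" using S1(1) unfolding fission_def by simp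
  ultimately have "Id_on {\<alpha>} \<in> rels S1" by blast
  moreover have ide: "Id_on {\<alpha>} = {(\<alpha>,\<alpha>)}" by auto
  ultimately have aS1: "Id_on {\<alpha>} \<in> S1" using singleton_rels[OF cc_part[OF ccS1], of "(\<alpha>,\<alpha>)"] by simp
  have Bf: "\<forall>\<beta>\<in>ar. Id_on {\<beta>} \<in> S1" using S1(2) unfolding is_fiber_def by blast
  have Dchar: "(x,y) \<in> dist_rel \<Gamma> m k \<longleftrightarrow> x \<in> \<Omega> \<and> y \<in> \<Omega> \<and> int (hdist m x y) = k" for x y k
    unfolding \<Omega>_def by (rule dist_rel_iff)
  have inj: "inj_on (\<lambda>\<gamma>. dist_rel \<Gamma> m (int (hdist m \<alpha> \<gamma>) - 1) `` {\<gamma>} \<inter> ar) \<Omega>"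
    using rho_inj[OF g, of m] unfolding rho_def[abs_def] \<Omega>_def \<alpha>_def ar_def .
  have "\<forall>\<gamma>\<in>\<Omega>. Id_on {\<gamma>} \<in> S1"
    by (rule all_fibers[OF ccS1 aO aS1 Bf Drels Dchar inj])
  then have "complete_cc \<Omega> S1" by (rule complete_from_fibers[OF ccS1])
  then have base: "is_base \<Omega> S0 ar"
    unfolding is_base_def S1_def .
  have main: "inj_on (rho \<Gamma> m \<gamma>\<^sub>0) (cart_power \<Gamma> m) \<and>
     rho \<Gamma> m \<gamma>\<^sub>0 ` cart_power \<Gamma> m = {\<Lambda>. \<Lambda> \<subseteq> dist_rel \<Gamma> m 1 `` {replicate m \<gamma>\<^sub>0} \<and>
     (\<forall>i<m. card (\<Lambda> \<inter> {\<beta>\<in>cart_power \<Gamma> m. hdist m (replicate m \<gamma>\<^sub>0) \<beta> = 1 \<and> \<beta>!i \<noteq> \<gamma>\<^sub>0}) \<le> 1)} \<and>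
     is_base (cart_power \<Gamma> m) (point_extension (cart_power \<Gamma> m) (exp_rels T m L) (replicate m \<gamma>\<^sub>0))
        (dist_rel \<Gamma> m 1 `` {replicate m \<gamma>\<^sub>0})"
    by (intro conjI rho_inj[OF g] rho_image[OF g finG] base[unfolded S0_def \<Omega>_def S_def \<alpha>_def ar_def])
  show ?thesis unfolding Let_def using main[unfolded rho_def[abs_def]] .
qed

end
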